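(* Let $\langle W,\varphi,(Y,\mathbb S,\sigma)\rangle$ be a monotone one-dimensional cocycle with skew-product system $(X,\mathbb S_+,\pi)$, $h=\mathrm{pr}_2$, and $\tau\in\mathbb S_+$, $\tau>0$. Assume: (1) $u_1<u_2$ implies $\varphi(k\tau,u_1,y)<\varphi(k\tau,u_2,y)$ for all $k\in\mathbb N$, $y\in Y$; (2) $x_0\in X$ has precompact semi-trajectory; (3) $y_0:=h(x_0)$ is asymptotically $\tau$-periodic, with $q:=\lim_{k\to\infty}\sigma(k\tau,y_0)$; (4) the $\tau$-periodic points of $(X,\mathbb S_+,\pi)$ in the fibre $X_q=W\times\{q\}$ are isolated, i.e. for every $u$ with $\varphi(\tau,u,q)=u$ there is $\delta>0$ such that no $u'\neq u$ with $|u'-u|<\delta$ satisfies $\varphi(\tau,u',q)=u'$. Then $x_0$ is asymptotically $\tau$-periodic, i.e. there is a $\tau$-periodic point $p\in X$ with $\rho(\pi(t,x_0),\pi(t,p))\to0$ as $t\to+\infty$.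
   Context: $\mathbb S=\mathbb R$ or $\mathbb Z$, $\mathbb S_+=\{t\in\mathbb S:t\ge0\}$. $(Y,\mathbb S,\sigma)$ is a two-sided dynamical system on a complete metric space; $y_0$ is asymptotically $\tau$-periodic if there is $q$ with $\sigma(\tau,q)=q$ and $\rho(\sigma(t,y_0),\sigma(t,q))\to0$. $W\subseteq\mathbb R$ is an interval; a monotone cocycle is a continuous $\varphi:\mathbb S_+\times W\times Y\to W$ with $\varphi(0,u,y)=u$, $\varphi(t+s,u,y)=\varphi(t,\varphi(s,u,y),\sigma(s,y))$ and $u_1\le u_2\Rightarrow\varphi(t,u_1,y)\le\varphi(t,u_2,y)$. Skew-product: $X=W\times Y$, $\pi(t,(u,y))=(\varphi(t,u,y),\sigma(t,y))$; a point $p$ is $\tau$-periodic if $\pi(\tau,p)=p$. *)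

theory Defs
  imports "HOL-Analysis.Analysis"
begin

definition time_set :: "real set \<Rightarrow> bool" where
  "time_set T \<longleftrightarrow> T = UNIV \<or> T = \<int>"

definition nonneg_times :: "real set \<Rightarrow> real set" where
  "nonneg_times T = {t \<in> T. 0 \<le> t}"

definition dyn_system :: "real set \<Rightarrow> (real \<Rightarrow> 'y::metric_space \<Rightarrow> 'y) \<Rightarrow> bool" where
  "dyn_system T \<sigma> \<longleftrightarrow>
     time_set T \<and>
     continuous_on (T \<times> UNIV) (\<lambda>(t, y). \<sigma> t y) \<and>
     (\<forall>y. \<sigma> 0 y = y) \<and>
     (\<forall>t\<in>T. \<forall>s\<in>T. \<forall>y. \<sigma> (t + s) y = \<sigma> t (\<sigma> s y))"

definition monotone_cocycle ::
  "real set \<Rightarrow> real set \<Rightarrow> (real \<Rightarrow> real \<Rightarrow> 'y::metric_space \<Rightarrow> real)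
     \<Rightarrow> (real \<Rightarrow> 'y \<Rightarrow> 'y) \<Rightarrow> bool" where
  "monotone_cocycle T W \<phi> \<sigma> \<longleftrightarrow>
     dyn_system T \<sigma> \<and> is_interval W \<and>
     continuous_on (nonneg_times T \<times> W \<times> UNIV) (\<lambda>(t, u, y). \<phi> t u y) \<and>
     (\<forall>t\<in>nonneg_times T. \<forall>u\<in>W. \<forall>y. \<phi> t u y \<in> W) \<and>
     (\<forall>u\<in>W. \<forall>y. \<phi> 0 u y = u) \<and>
     (\<forall>t\<in>nonneg_times T. \<forall>s\<in>nonneg_times T. \<forall>u\<in>W. \<forall>y.
        \<phi> (t + s) u y = \<phi> t (\<phi> s u y) (\<sigma> s y)) \<and>
     (\<forall>t\<in>nonneg_times T. \<forall>u1\<in>W. \<forall>u2\<in>W. \<forall>y.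
        u1 \<le> u2 \<longrightarrow> \<phi> t u1 y \<le> \<phi> t u2 y)"

definition skew_product ::
  "(real \<Rightarrow> real \<Rightarrow> 'y \<Rightarrow> real) \<Rightarrow> (real \<Rightarrow> 'y \<Rightarrow> 'y) \<Rightarrow> real \<Rightarrow> real \<times> 'y \<Rightarrow> real \<times> 'y" where
  "skew_product \<phi> \<sigma> t x = (\<phi> t (fst x) (snd x), \<sigma> t (snd x))"

definition time_at_top :: "real set \<Rightarrow> real filter" where
  "time_at_top T = inf at_top (principal T)"

definition asymptotically_periodic ::
  "real set \<Rightarrow> 'z set \<Rightarrow> (real \<Rightarrow> 'z::metric_space \<Rightarrow> 'z) \<Rightarrow> real \<Rightarrow> 'z \<Rightarrow> bool" where
  "asymptotically_periodic T Z f \<tau> z0 \<longleftrightarrow>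
     (\<exists>p\<in>Z. f \<tau> p = p \<and> ((\<lambda>t. dist (f t z0) (f t p)) \<longlongrightarrow> 0) (time_at_top T))"

text \<open>Precompact positive semi-trajectory in X = W \<times> Y: its closure in X is compact,
  equivalently the ambient closure is compact and contained in X.\<close>

definition precompact_semitrajectory ::
  "real set \<Rightarrow> ('x::metric_space) set \<Rightarrow> (real \<Rightarrow> 'x \<Rightarrow> 'x) \<Rightarrow> 'x \<Rightarrow> bool" where
  "precompact_semitrajectory T X f x0 \<longleftrightarrow>
     (let Orb = (\<lambda>t. f t x0) ` nonneg_times T in compact (closure Orb) \<and> closure Orb \<subseteq> X)"

end

theory Submission
  imports Defs
begin

theorem mainTheorem10:
  fixes T W :: "real set"
    and \<phi> :: "real \<Rightarrow> real \<Rightarrow> 'y::complete_space \<Rightarrow> real"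
    and \<sigma> :: "real \<Rightarrow> 'y \<Rightarrow> 'y"
    and \<tau> :: real and x0 :: "real \<times> 'y" and q :: 'y
  assumes coc: "monotone_cocycle T W \<phi> \<sigma>"
    and tau: "\<tau> \<in> T" "\<tau> > 0"
    and strict: "\<And>(k::nat) u1 u2 y. u1 \<in> W \<Longrightarrow> u2 \<in> W \<Longrightarrow> u1 < u2 \<Longrightarrow>
                   \<phi> (real k * \<tau>) u1 y < \<phi> (real k * \<tau>) u2 y"
    and x0: "x0 \<in> W \<times> UNIV"
    and precomp: "precompact_semitrajectory T (W \<times> UNIV) (skew_product \<phi> \<sigma>) x0"
    and y0: "asymptotically_periodic T UNIV \<sigma> \<tau> (snd x0)"
    and q: "(\<lambda>k::nat. \<sigma> (real k * \<tau>) (snd x0)) \<longlonglongrightarrow> q"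
    and isolated: "\<And>u. u \<in> W \<Longrightarrow> \<phi> \<tau> u q = u \<Longrightarrow>
                     \<exists>\<delta>>0. \<forall>u'\<in>W. u' \<noteq> u \<and> \<bar>u' - u\<bar> < \<delta> \<longrightarrow> \<phi> \<tau> u' q \<noteq> u'"
  shows "asymptotically_periodic T (W \<times> UNIV) (skew_product \<phi> \<sigma>) \<tau> x0"
proof -
  define Tp where "Tp = nonneg_times T"
  define \<pi> where "\<pi> = skew_product \<phi> \<sigma>"
  define u0 where "u0 = fst x0"
  define y0 where "y0 = snd x0"
  have Tcase: "T = UNIV \<or> T = \<int>" using coc by (simp add: monotone_cocycle_def dyn_system_def time_set_def)
  have sigcont: "continuous_on (T \<times> UNIV) (\<lambda>(t, y). \<sigma> t y)"
    and sig0: "\<And>y. \<sigma> 0 y = y"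
    and siggrp: "\<And>t s y. t \<in> T \<Longrightarrow> s \<in> T \<Longrightarrow> \<sigma> (t + s) y = \<sigma> t (\<sigma> s y)"
    using coc by (auto simp: monotone_cocycle_def dyn_system_def)
  have Wint: "is_interval W"
    and phicont: "continuous_on (Tp \<times> W \<times> UNIV) (\<lambda>(t, u, y). \<phi> t u y)"
    and phiW: "\<And>t u y. t \<in> Tp \<Longrightarrow> u \<in> W \<Longrightarrow> \<phi> t u y \<in> W"
    and phi0: "\<And>u y. u \<in> W \<Longrightarrow> \<phi> 0 u y = u"
    and phic: "\<And>t s u y. t \<in> Tp \<Longrightarrow> s \<in> Tp \<Longrightarrow> u \<in> W \<Longrightarrow> \<phi> (t + s) u y = \<phi> t (\<phi> s u y) (\<sigma> s y)"
    and phimono: "\<And>t u1 u2 y. t \<in> Tp \<Longrightarrow> u1 \<in> W \<Longrightarrow> u2 \<in> W \<Longrightarrow> u1 \<le> u2 \<Longrightarrow> \<phi> t u1 y \<le> \<phi> t u2 y"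
    using coc unfolding monotone_cocycle_def Tp_def by blast+
  have TpT: "\<And>t. t \<in> Tp \<Longrightarrow> t \<in> T" by (simp add: Tp_def nonneg_times_def)
  have Tadd: "\<And>s t. s \<in> T \<Longrightarrow> t \<in> T \<Longrightarrow> s + t \<in> T" using Tcase by auto
  have kT: "\<And>k::nat. real k * \<tau> \<in> Tp"
  proof -
    fix k :: nat
    have "real k * \<tau> \<in> T" using Tcase tau(1) by (auto intro: Ints_mult)
    then show "real k * \<tau> \<in> Tp" using tau(2) by (simp add: Tp_def nonneg_times_def)
  qed
  have tauTp: "\<tau> \<in> Tp" using tau by (simp add: Tp_def nonneg_times_def)
  have u0W: "u0 \<in> W" using x0 by (auto simp: u0_def)
  define u where "u k = \<phi> (real k * \<tau>) u0 y0" for k :: nat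
  define y where "y k = \<sigma> (real k * \<tau>) y0" for k :: nat
  define P where "P v = \<phi> \<tau> v q" for v
  have uW: "\<And>k. u k \<in> W" using phiW kT u0W by (simp add: u_def)
  have ustep: "\<And>k. u (Suc k) = \<phi> \<tau> (u k) (y k)"
  proof -
    fix k
    have "real (Suc k) * \<tau> = \<tau> + real k * \<tau>" by (simp add: algebra_simps)
    then show "u (Suc k) = \<phi> \<tau> (u k) (y k)" using phic[OF tauTp kT u0W] by (simp add: u_def y_def)
  qed
  have yfun: "y = (\<lambda>k. \<sigma> (real k * \<tau>) (snd x0))" by (simp add: fun_eq_iff y_def y0_def)
  have yq: "y \<longlonglongrightarrow> q" using q by (simp add: yfun)
  have Ftend: "\<And>m. m \<in> W \<Longrightarrow> (\<lambda>k. \<phi> \<tau> m (y k)) \<longlonglongrightarrow> P m"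
  proof -
    fix m assume m: "m \<in> W"
    have "((\<lambda>k. (\<lambda>(t, u, y). \<phi> t u y) (\<tau>, m, y k)) \<longlongrightarrow> (\<lambda>(t, u, y). \<phi> t u y) (\<tau>, m, q)) sequentially"
      by (rule continuous_on_tendsto_compose[OF phicont]) (auto intro!: tendsto_intros yq simp: m tauTp)
    then show "(\<lambda>k. \<phi> \<tau> m (y k)) \<longlonglongrightarrow> P m" by (simp add: P_def)
  qed

  define Orb where "Orb = (\<lambda>t. \<pi> t x0) ` Tp"
  have Ccomp: "compact (closure Orb)" and CW: "closure Orb \<subseteq> W \<times> UNIV"
    using precomp by (simp_all add: precompact_semitrajectory_def Let_def Orb_def Tp_def \<pi>_def)
  have xk: "\<And>k. \<pi> (real k * \<tau>) x0 = (u k, y k)"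
    by (simp add: \<pi>_def skew_product_def u_def y_def u0_def y0_def)
  have xkOrb: "\<And>k. (u k, y k) \<in> Orb" unfolding Orb_def using kT xk by (metis image_eqI)
  obtain R where R: "\<And>k. \<bar>u k\<bar> \<le> R"
  proof -
    have "bounded Orb" using Ccomp compact_imp_bounded bounded_subset closure_subset by blast
    then obtain c e where ce: "\<And>z. z \<in> Orb \<Longrightarrow> dist c z \<le> e" unfolding bounded_def by blast
    have "\<bar>u k\<bar> \<le> \<bar>fst c\<bar> + e" for k
    proof -
      have "dist (fst c) (fst (u k, y k)) \<le> dist c (u k, y k)" by (rule dist_fst_le)
      also have "\<dots> \<le> e" using ce xkOrb by blast
      finally show ?thesis by (simp add: dist_real_def)
    qed
    then show ?thesis using that by blast
  qed
  have K: "(eventually (\<lambda>k. u k \<le> m) sequentially) \<or> (eventually (\<lambda>k. m \<le> u k) sequentially)"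
    if m: "m \<in> W" "P m \<noteq> m" for m
  proof (cases "P m < m")
    case True
    have "eventually (\<lambda>k. \<phi> \<tau> m (y k) < m) sequentially"
      using order_tendstoD(2)[OF Ftend[OF m(1)] True] .
    then obtain N where N: "\<And>k. k \<ge> N \<Longrightarrow> \<phi> \<tau> m (y k) < m" unfolding eventually_sequentially by blast
    show ?thesis
    proof (cases "\<exists>k0\<ge>N. u k0 \<le> m")
      case True
      then obtain k0 where k0: "k0 \<ge> N" "u k0 \<le> m" by blast
      have "u (k0 + j) \<le> m" for j
      proof (induct j)
        case 0 then show ?case using k0 by simp
      next
        case (Suc j)
        have "u (k0 + Suc j) = \<phi> \<tau> (u (k0 + j)) (y (k0 + j))" using ustep by simp
        also have "\<dots> \<le> \<phi> \<tau> m (y (k0 + j))" using phimono[OF tauTp uW m(1) Suc] .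
        also have "\<dots> < m" using N k0 by simp
        finally show ?case by simp
      qed
      then have "\<forall>k\<ge>k0. u k \<le> m" by (metis le_add_diff_inverse)
      then show ?thesis unfolding eventually_sequentially by blast
    next
      case False
      have "\<forall>k\<ge>N. m \<le> u k"
      proof (intro allI impI)
        fix k assume "N \<le> k" with False have "\<not> u k \<le> m" by blast then show "m \<le> u k" by simp
      qed
      then show ?thesis unfolding eventually_sequentially by blast
    qed
  next
    case False
    then have True': "P m > m" using m by auto
    have "eventually (\<lambda>k. \<phi> \<tau> m (y k) > m) sequentially"
      using order_tendstoD(1)[OF Ftend[OF m(1)] True'] .
    then obtain N where N: "\<And>k. k \<ge> N \<Longrightarrow> \<phi> \<tau> m (y k) > m" unfolding eventually_sequentially by blast
    show ?thesis
    proof (cases "\<exists>k0\<ge>N. u k0 \<ge> m")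
      case True
      then obtain k0 where k0: "k0 \<ge> N" "u k0 \<ge> m" by blast
      have "u (k0 + j) \<ge> m" for j
      proof (induct j)
        case 0 then show ?case using k0 by simp
      next
        case (Suc j)
        have "m < \<phi> \<tau> m (y (k0 + j))" using N k0 by simp
        also have "\<dots> \<le> \<phi> \<tau> (u (k0 + j)) (y (k0 + j))" using phimono[OF tauTp m(1) uW Suc] .
        also have "\<dots> = u (k0 + Suc j)" using ustep by simp
        finally show ?case by simp
      qed
      then have "\<forall>k\<ge>k0. m \<le> u k" by (metis le_add_diff_inverse)
      then show ?thesis unfolding eventually_sequentially by blast
    next
      case False
      have "\<forall>k\<ge>N. u k \<le> m"
      proof (intro allI impI)
        fix k assume "N \<le> k" with False have "\<not> m \<le> u k" by blast then show "u k \<le> m" by simp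
      qed
      then show ?thesis unfolding eventually_sequentially by blast
    qed
  qed
  define A where "A = liminf (\<lambda>k. ereal (u k))"
  define B where "B = limsup (\<lambda>k. ereal (u k))"
  have AB: "A \<le> B" unfolding A_def B_def by (rule Liminf_le_Limsup) simp
  have memW: "m \<in> W" if hm: "A < ereal m" "ereal m < B" for m
  proof -
    obtain i where i: "ereal (u i) < ereal m" using liminf_upper_bound[of "\<lambda>k. ereal (u k)" m 0] hm A_def by blast
    obtain j where j: "ereal m < ereal (u j)" using Limsup_obtain[of m sequentially "\<lambda>k. ereal (u k)"] hm B_def by blast
    have "u i < m" "m < u j" using i j by simp_all
    then show ?thesis using Wint uW[of i] uW[of j] unfolding is_interval_1 by (meson less_imp_le)
  qed
  have noAB: "\<not> A < B"
  proof
    assume AB': "A < B"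
    obtain m0 where m0: "A < ereal m0" "ereal m0 < B" using ereal_dense2[OF AB'] by blast
    obtain m where m: "A < ereal m" "ereal m < B" "P m \<noteq> m"
    proof (cases "P m0 = m0")
      case False then show ?thesis using that m0 by blast
    next
      case True
      obtain \<delta> where d: "\<delta> > 0" "\<forall>u'\<in>W. u' \<noteq> m0 \<and> \<bar>u' - m0\<bar> < \<delta> \<longrightarrow> \<phi> \<tau> u' q \<noteq> u'"
        using isolated[OF memW[OF m0] True[unfolded P_def]] by blast
      have "ereal m0 < min B (ereal (m0 + \<delta>))" using m0 d by simp
      then obtain m1 where m1: "ereal m0 < ereal m1" "ereal m1 < min B (ereal (m0 + \<delta>))" using ereal_dense2 by blast
      have "A < ereal m1" using m0 m1 by (meson less_trans)
      moreover have "ereal m1 < B" using m1 by simp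
      moreover have "P m1 \<noteq> m1" using d m1 memW[OF \<open>A < ereal m1\<close> \<open>ereal m1 < B\<close>] by (auto simp: P_def)
      ultimately show ?thesis using that by blast
    qed
    have mW: "m \<in> W" using memW m by blast
    from K[OF mW m(3)] show False
    proof
      assume "eventually (\<lambda>k. u k \<le> m) sequentially"
      then have "B \<le> ereal m" unfolding B_def by (intro Limsup_bounded) (auto elim: eventually_mono)
      then show False using m by simp
    next
      assume "eventually (\<lambda>k. m \<le> u k) sequentially"
      then have "ereal m \<le> A" unfolding A_def by (intro Liminf_bounded) (auto elim: eventually_mono)
      then show False using m by simp
    qed
  qed
  have AeqB: "A = B" using AB noAB by simp
  have Rlo: "\<And>k. ereal (-R) \<le> ereal (u k)" and Rhi: "\<And>k. ereal (u k) \<le> ereal R"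
    using R by (simp_all add: abs_le_iff) (metis abs_le_iff minus_le_iff)+
  have Alo: "ereal (-R) \<le> A" unfolding A_def using Rlo by (intro Liminf_bounded always_eventually) blast
  have Bhi: "B \<le> ereal R" unfolding B_def using Rhi by (intro Limsup_bounded always_eventually) blast
  obtain L where AL: "A = ereal L" using Alo Bhi AeqB by (cases A) auto
  have uL: "u \<longlonglongrightarrow> L" by (rule limsup_le_liminf_real) (use AL AeqB A_def B_def in auto)

  have pin: "(L, q) \<in> W \<times> UNIV"
  proof -
    have "(\<lambda>k. (u k, y k)) \<longlonglongrightarrow> (L, q)" using uL yq by (rule tendsto_Pair)
    then have "(L, q) \<in> closure Orb" unfolding closure_sequential using xkOrb by (intro exI[of _ "\<lambda>k. (u k, y k)"]) auto
    then show ?thesis using CW by blast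
  qed
  then have LW: "L \<in> W" by simp
  have PL: "P L = L"
  proof -
    have "((\<lambda>k. (\<lambda>(t, u, y). \<phi> t u y) (\<tau>, u k, y k)) \<longlongrightarrow> (\<lambda>(t, u, y). \<phi> t u y) (\<tau>, L, q)) sequentially"
      by (rule continuous_on_tendsto_compose[OF phicont]) (auto intro!: tendsto_intros yq uL simp: LW tauTp uW)
    then have "(\<lambda>k. u (Suc k)) \<longlonglongrightarrow> P L" by (simp add: P_def ustep)
    moreover have "(\<lambda>k. u (Suc k)) \<longlonglongrightarrow> L" using uL by (rule LIMSEQ_Suc)
    ultimately show ?thesis by (rule LIMSEQ_unique)
  qed
  have sigper: "\<sigma> (real k * \<tau>) z = z" if "\<sigma> \<tau> z = z" for z k
  proof (induct k)
    case 0 then show ?case by (simp add: sig0)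
  next
    case (Suc k)
    have "real (Suc k) * \<tau> = \<tau> + real k * \<tau>" by (simp add: algebra_simps)
    then show ?case using siggrp[OF tau(1) TpT[OF kT[of k]]] Suc that by simp
  qed
  obtain p' where p': "\<sigma> \<tau> p' = p'" "((\<lambda>t. dist (\<sigma> t y0) (\<sigma> t p')) \<longlongrightarrow> 0) (time_at_top T)"
    using y0 unfolding asymptotically_periodic_def y0_def by blast
  have fl: "filterlim (\<lambda>k. real k * \<tau>) (time_at_top T) sequentially"
    unfolding time_at_top_def filterlim_inf filterlim_principal
  proof
    have "filterlim (\<lambda>k. \<tau> * real k) at_top sequentially"
      by (rule filterlim_tendsto_pos_mult_at_top[OF tendsto_const tau(2) filterlim_real_sequentially])
    then show "filterlim (\<lambda>k. real k * \<tau>) at_top sequentially" by (simp add: mult.commute)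
    show "\<forall>\<^sub>F x in sequentially. real x * \<tau> \<in> T" using kT TpT by simp
  qed
  have ydist: "((\<lambda>k. dist (\<sigma> (real k * \<tau>) y0) (\<sigma> (real k * \<tau>) p')) \<longlongrightarrow> 0) sequentially"
    using filterlim_compose[OF p'(2) fl] by (simp add: o_def)
  have "y \<longlonglongrightarrow> p'" apply (rule tendsto_dist_iff[THEN iffD2]) using ydist by (simp add: y_def sigper[OF p'(1)])
  then have qp: "q = p'" using yq LIMSEQ_unique by blast
  have sq: "\<sigma> \<tau> q = q" using qp p' by simp
  have phiper: "\<phi> (real k * \<tau>) L q = L" for k
  proof (induct k)
    case 0 then show ?case by (simp add: phi0 LW)
  next
    case (Suc k)
    have "real (Suc k) * \<tau> = \<tau> + real k * \<tau>" by (simp add: algebra_simps)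
    then show ?case using phic[OF tauTp kT LW] Suc sigper[OF sq] PL by (simp add: P_def)
  qed
  define p where "p = (L, q)"
  have pk: "\<pi> (real k * \<tau>) p = p" for k using phiper sigper[OF sq] by (simp add: \<pi>_def skew_product_def p_def)
  have pper: "\<pi> \<tau> p = p" using pk[of 1] by simp
  have shift: "\<pi> (s + real k * \<tau>) x = \<pi> s (\<pi> (real k * \<tau>) x)" if "s \<in> Tp" "x \<in> W \<times> UNIV" for s k x
    using phic[OF that(1) kT] siggrp[OF TpT[OF that(1)] TpT[OF kT]] that(2)
    by (cases x) (simp add: \<pi>_def skew_product_def)
  have xconv: "(\<lambda>k. \<pi> (real k * \<tau>) x0) \<longlonglongrightarrow> p" unfolding xk p_def using uL yq by (rule tendsto_Pair)
  define S0 where "S0 = {0..\<tau>} \<inter> T"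
  have S0c: "compact S0" unfolding S0_def using Tcase closed_Ints by (intro compact_Int_closed) auto
  have S0Tp: "S0 \<subseteq> Tp" by (auto simp: S0_def Tp_def nonneg_times_def)
  define G where "G z = \<pi> (fst z) (snd z)" for z
  have Gcont: "continuous_on (Tp \<times> (W \<times> UNIV)) G"
  proof -
    have e1: "(\<lambda>z. \<phi> (fst z) (fst (snd z)) (snd (snd z))) = (\<lambda>(t, u, y). \<phi> t u y)" by (auto simp: fun_eq_iff)
    have c1: "continuous_on (Tp \<times> (W \<times> UNIV)) (\<lambda>z. \<phi> (fst z) (fst (snd z)) (snd (snd z)))"
      using phicont unfolding e1 by simp
    have c2': "continuous_on (Tp \<times> (W \<times> UNIV)) (\<lambda>z. (\<lambda>(t, y). \<sigma> t y) (fst z, snd (snd z)))"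
      by (rule continuous_on_compose2[OF sigcont]) (auto intro!: continuous_intros simp: Tp_def nonneg_times_def)
    have c2: "continuous_on (Tp \<times> (W \<times> UNIV)) (\<lambda>z. \<sigma> (fst z) (snd (snd z)))" using c2' by simp
    have "G = (\<lambda>z. (\<phi> (fst z) (fst (snd z)) (snd (snd z)), \<sigma> (fst z) (snd (snd z))))"
      by (auto simp: fun_eq_iff G_def \<pi>_def skew_product_def)
    then show ?thesis using continuous_on_Pair[OF c1 c2] by simp
  qed
  have uc: "uniformly_continuous_on (S0 \<times> closure Orb) G"
    apply (rule compact_uniformly_continuous)
    apply (rule continuous_on_subset[OF Gcont]) using S0Tp CW apply blast
    using S0c Ccomp by (rule compact_Times)
  have pC: "p \<in> closure Orb"
    unfolding closure_sequential using xconv xk xkOrb by (intro exI[of _ "\<lambda>k. \<pi> (real k * \<tau>) x0"]) auto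
  have xC: "\<pi> (real k * \<tau>) x0 \<in> closure Orb" for k using xk xkOrb closure_subset by (metis subsetD)
  have main: "((\<lambda>t. dist (\<pi> t x0) (\<pi> t p)) \<longlongrightarrow> 0) (time_at_top T)"
    unfolding tendsto_iff
  proof (intro allI impI)
    fix e :: real assume e: "e > 0"
    obtain d where d: "d > 0" "\<And>a b. a \<in> S0 \<times> closure Orb \<Longrightarrow> b \<in> S0 \<times> closure Orb \<Longrightarrow> dist b a < d \<Longrightarrow> dist (G b) (G a) < e"
      using uc e unfolding uniformly_continuous_on_def by metis
    obtain N where N: "\<And>k. k \<ge> N \<Longrightarrow> dist (\<pi> (real k * \<tau>) x0) p < d"
      using xconv d(1) unfolding tendsto_iff eventually_sequentially by blast
    show "\<forall>\<^sub>F t in time_at_top T. dist (dist (\<pi> t x0) (\<pi> t p)) 0 < e"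
      unfolding time_at_top_def eventually_inf_principal eventually_at_top_linorder
    proof (intro exI allI impI)
      fix t assume t: "t \<ge> (real N + 1) * \<tau>" "t \<in> T"
      define k where "k = nat \<lfloor>t / \<tau>\<rfloor>"
      define s where "s = t - real k * \<tau>"
      have "t / \<tau> \<ge> real N + 1" using t tau(2) by (simp add: pos_le_divide_eq)
      then have fl1: "\<lfloor>t / \<tau>\<rfloor> \<ge> int N + 1" by (simp add: le_floor_iff)
      then have kN: "k \<ge> N" by (simp add: k_def)
      have rk: "real k = of_int \<lfloor>t / \<tau>\<rfloor>" using fl1 by (simp add: k_def)
      have "real k \<le> t / \<tau>" using rk by simp
      then have s0: "s \<ge> 0" using tau(2) by (simp add: s_def pos_le_divide_eq)
      have "t / \<tau> < real k + 1" using rk by linarith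
      then have s1: "s \<le> \<tau>" using tau(2) by (simp add: s_def pos_divide_less_eq algebra_simps)
      have sT: "s \<in> T" using Tcase
      proof
        assume "T = UNIV" then show ?thesis by simp
      next
        assume Tz: "T = \<int>"
        have "real k * \<tau> \<in> T" using kT TpT by blast
        then show ?thesis using t(2) Tz by (simp add: s_def Ints_diff)
      qed
      have sS0: "s \<in> S0" using s0 s1 sT by (simp add: S0_def)
      have tsk: "t = s + real k * \<tau>" by (simp add: s_def)
      have x0W: "x0 \<in> W \<times> UNIV" by (rule x0)
      have pW: "p \<in> W \<times> UNIV" using pin by (simp add: p_def)
      have "\<pi> t x0 = G (s, \<pi> (real k * \<tau>) x0)" using shift[OF _ x0W, of s k] sS0 S0Tp tsk by (auto simp: G_def)
      moreover have "\<pi> t p = G (s, p)" using shift[OF _ pW, of s k] sS0 S0Tp tsk pk by (auto simp: G_def)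
      moreover have "dist (G (s, \<pi> (real k * \<tau>) x0)) (G (s, p)) < e"
        using d(2)[of "(s, p)" "(s, \<pi> (real k * \<tau>) x0)"] sS0 pC xC N[OF kN] by (simp add: dist_Pair_Pair)
      ultimately show "dist (dist (\<pi> t x0) (\<pi> t p)) 0 < e" by simp
    qed
  qed
  show ?thesis unfolding asymptotically_periodic_def
    using pin pper main by (auto simp: p_def \<pi>_def)
qed
end
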